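(* Let $m=1$ (so $Y=W_2\times W_3$). For $h\in\mathbb{R}[T]$, the real circle form $\mu_h=\varphi_h\circ\mu_0$ is equivalent to $\mu_0$ if and only if $h(0)=0$. In particular, $\mu_0$ and $\mu_1$ (the form for the constant polynomial $h=1$) are inequivalent, and the forms $\mu_h$, $h\in\mathbb{R}[T]$, fall into exactly two equivalence classes.
   Context: For $k\ge1$, $W_k=\mathbb{C}^2$ is the $\mathbb{C}^*$-module with weights $(k,-k)$: $t\cdot(x,y)=(t^kx,t^{-k}y)$. Here $n=3$ and $Y=W_2\times W_3$ with coordinates $(a,b,x,y)$, $t\cdot(a,b,x,y)=(t^2a,t^{-2}b,t^3x,t^{-3}y)$. Let $\sigma(t)=\overline{t}^{-1}$ on $\mathbb{C}^*$. A real circle form on $Y$ is an antiholomorphic involution $\mu$ of $Y$ with $\mu(t\cdot p)=\sigma(t)\cdot\mu(p)$; two such forms $\mu_1,\mu_2$ are equivalent if $\mu_2=\psi\circ\mu_1\circ\psi^{-1}$ for some regular $\mathbb{C}^*$-equivariant automorphism $\psi$ of $Y$. Let $\mu_0(a,b,x,y)=(\overline{b},\overline{a},\overline{y},\overline{x})$, $T=ab$, and for $h\in\mathbb{R}[T]$ let $M_h=\begin{pmatrix}1-Th^2 & a^nh^n\\ -b^nh^n & \sum_{j=0}^{n-1}(Th^2)^j\end{pmatrix}$ (with $h=h(ab)$), $\varphi_h(a,b,x,y)=(a,b,M_h\binom{x}{y})$, and $\mu_h=\varphi_h\circ\mu_0$. *)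

theory Defs
  imports Complex_Main "HOL-Computational_Algebra.Polynomial"
begin

text \<open>The variety Y = W_2 x W_3 = C^4 with coordinates (a,b,x,y).\<close>
type_synonym Y = "complex \<times> complex \<times> complex \<times> complex"

definition act :: "complex \<Rightarrow> Y \<Rightarrow> Y" where
  "act t p = (case p of (a,b,x,y) \<Rightarrow>
      (t^2 * a, inverse t ^ 2 * b, t^3 * x, inverse t ^ 3 * y))"

definition sigma :: "complex \<Rightarrow> complex" where
  "sigma t = inverse (cnj t)"

inductive_set regular_fun :: "(Y \<Rightarrow> complex) set" where
  const: "(\<lambda>p. c) \<in> regular_fun"
| coord_a: "(\<lambda>(a,b,x,y). a) \<in> regular_fun"
| coord_b: "(\<lambda>(a,b,x,y). b) \<in> regular_fun"
| coord_x: "(\<lambda>(a,b,x,y). x) \<in> regular_fun"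
| coord_y: "(\<lambda>(a,b,x,y). y) \<in> regular_fun"
| add: "f \<in> regular_fun \<Longrightarrow> g \<in> regular_fun \<Longrightarrow> (\<lambda>p. f p + g p) \<in> regular_fun"
| mult: "f \<in> regular_fun \<Longrightarrow> g \<in> regular_fun \<Longrightarrow> (\<lambda>p. f p * g p) \<in> regular_fun"

definition regular_map :: "(Y \<Rightarrow> Y) \<Rightarrow> bool" where
  "regular_map \<psi> \<longleftrightarrow>
     (\<lambda>p. fst (\<psi> p)) \<in> regular_fun \<and>
     (\<lambda>p. fst (snd (\<psi> p))) \<in> regular_fun \<and>
     (\<lambda>p. fst (snd (snd (\<psi> p)))) \<in> regular_fun \<and>
     (\<lambda>p. snd (snd (snd (\<psi> p)))) \<in> regular_fun"

definition regular_automorphism :: "(Y \<Rightarrow> Y) \<Rightarrow> bool" where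
  "regular_automorphism \<psi> \<longleftrightarrow> bij \<psi> \<and> regular_map \<psi> \<and> regular_map (inv \<psi>)"

definition equivariant :: "(Y \<Rightarrow> Y) \<Rightarrow> bool" where
  "equivariant \<psi> \<longleftrightarrow> (\<forall>t p. t \<noteq> 0 \<longrightarrow> \<psi> (act t p) = act t (\<psi> p))"

definition antiregular_map :: "(Y \<Rightarrow> Y) \<Rightarrow> bool" where
  "antiregular_map \<mu> \<longleftrightarrow>
     regular_map (\<lambda>p. case \<mu> p of (a,b,x,y) \<Rightarrow> (cnj a, cnj b, cnj x, cnj y))"

definition real_circle_form :: "(Y \<Rightarrow> Y) \<Rightarrow> bool" where
  "real_circle_form \<mu> \<longleftrightarrow> antiregular_map \<mu> \<and> \<mu> \<circ> \<mu> = id \<and>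
     (\<forall>t p. t \<noteq> 0 \<longrightarrow> \<mu> (act t p) = act (sigma t) (\<mu> p))"

definition forms_equivalent :: "(Y \<Rightarrow> Y) \<Rightarrow> (Y \<Rightarrow> Y) \<Rightarrow> bool" where
  "forms_equivalent \<mu>1 \<mu>2 \<longleftrightarrow>
     (\<exists>\<psi>. regular_automorphism \<psi> \<and> equivariant \<psi> \<and> \<mu>2 = \<psi> \<circ> \<mu>1 \<circ> inv \<psi>)"

definition mu0 :: "Y \<Rightarrow> Y" where
  "mu0 p = (case p of (a,b,x,y) \<Rightarrow> (cnj b, cnj a, cnj y, cnj x))"

text \<open>n = 3.  M_h with h evaluated at T = ab (h a real polynomial).\<close>
definition phi :: "real poly \<Rightarrow> Y \<Rightarrow> Y" where
  "phi h p = (case p of (a,b,x,y) \<Rightarrow>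
     (let T = a * b; hh = poly (map_poly complex_of_real h) T;
          m11 = 1 - T * hh^2; m12 = a^3 * hh^3;
          m21 = - (b^3 * hh^3); m22 = (\<Sum>j<3. (T * hh^2)^j)
      in (a, b, m11 * x + m12 * y, m21 * x + m22 * y)))"

definition mu :: "real poly \<Rightarrow> Y \<Rightarrow> Y" where
  "mu h = phi h \<circ> mu0"

end

theory Submission
  imports Defs "HOL-Computational_Algebra.Fundamental_Theorem_Algebra"
begin


lemma coeff_mult_1: "coeff (p * q) 1 = coeff p 0 * coeff q 1 + coeff p 1 * coeff (q::'a::comm_semiring_1 poly) 0"
  by (simp add: coeff_mult)

lemma jet:
  assumes "f \<in> regular_fun"
  shows "\<exists>Da Db Dx Dy. Dx \<in> regular_fun \<and> Dy \<in> regular_fun \<and>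
    (\<forall>ca cb cx cy. \<exists>q. (\<forall>e. f (poly ca e, poly cb e, poly cx e, poly cy e) = poly q e) \<and>
       coeff q 1 = Da (coeff ca 0, coeff cb 0, coeff cx 0, coeff cy 0) * coeff ca 1
                 + Db (coeff ca 0, coeff cb 0, coeff cx 0, coeff cy 0) * coeff cb 1
                 + Dx (coeff ca 0, coeff cb 0, coeff cx 0, coeff cy 0) * coeff cx 1
                 + Dy (coeff ca 0, coeff cb 0, coeff cx 0, coeff cy 0) * coeff cy 1)"
  using assms
proof induction
  case (const c)
  show ?case
    apply (rule exI[of _ "\<lambda>_. 0"])+
    apply (intro conjI regular_fun.const allI)
    apply (rule exI[of _ "[:c:]"])
    by simp
next
  case coord_a
  show ?case
    apply (rule exI[of _ "\<lambda>_. 1"], rule exI[of _ "\<lambda>_. 0"], rule exI[of _ "\<lambda>_. 0"], rule exI[of _ "\<lambda>_. 0"])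
    apply (intro conjI regular_fun.const allI)
    subgoal for ca cb cx cy by (rule exI[of _ ca]) simp
    done
next
  case coord_b
  show ?case
    apply (rule exI[of _ "\<lambda>_. 0"], rule exI[of _ "\<lambda>_. 1"], rule exI[of _ "\<lambda>_. 0"], rule exI[of _ "\<lambda>_. 0"])
    apply (intro conjI regular_fun.const allI)
    subgoal for ca cb cx cy by (rule exI[of _ cb]) simp
    done
next
  case coord_x
  show ?case
    apply (rule exI[of _ "\<lambda>_. 0"], rule exI[of _ "\<lambda>_. 0"], rule exI[of _ "\<lambda>_. 1"], rule exI[of _ "\<lambda>_. 0"])
    apply (intro conjI regular_fun.const allI)
    subgoal for ca cb cx cy by (rule exI[of _ cx]) simp
    done
next
  case coord_y
  show ?case
    apply (rule exI[of _ "\<lambda>_. 0"], rule exI[of _ "\<lambda>_. 0"], rule exI[of _ "\<lambda>_. 0"], rule exI[of _ "\<lambda>_. 1"])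
    apply (intro conjI regular_fun.const allI)
    subgoal for ca cb cx cy by (rule exI[of _ cy]) simp
    done
next
  case (add f g)
  then obtain Da Db Dx Dy Ea Eb Ex Ey where
    F: "Dx \<in> regular_fun" "Dy \<in> regular_fun" and F2: "\<And>ca cb cx cy. \<exists>q. (\<forall>e. f (poly ca e, poly cb e, poly cx e, poly cy e) = poly q e) \<and>
       coeff q 1 = Da (coeff ca 0, coeff cb 0, coeff cx 0, coeff cy 0) * coeff ca 1
                 + Db (coeff ca 0, coeff cb 0, coeff cx 0, coeff cy 0) * coeff cb 1
                 + Dx (coeff ca 0, coeff cb 0, coeff cx 0, coeff cy 0) * coeff cx 1
                 + Dy (coeff ca 0, coeff cb 0, coeff cx 0, coeff cy 0) * coeff cy 1"
    and G: "Ex \<in> regular_fun" "Ey \<in> regular_fun" and G2: "\<And>ca cb cx cy. \<exists>q. (\<forall>e. g (poly ca e, poly cb e, poly cx e, poly cy e) = poly q e) \<and>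
       coeff q 1 = Ea (coeff ca 0, coeff cb 0, coeff cx 0, coeff cy 0) * coeff ca 1
                 + Eb (coeff ca 0, coeff cb 0, coeff cx 0, coeff cy 0) * coeff cb 1
                 + Ex (coeff ca 0, coeff cb 0, coeff cx 0, coeff cy 0) * coeff cx 1
                 + Ey (coeff ca 0, coeff cb 0, coeff cx 0, coeff cy 0) * coeff cy 1"
    by metis
  have "\<exists>q. (\<forall>e. f (poly ca e, poly cb e, poly cx e, poly cy e) + g (poly ca e, poly cb e, poly cx e, poly cy e) = poly q e) \<and>
       coeff q 1 = (\<lambda>p. Da p + Ea p) (coeff ca 0, coeff cb 0, coeff cx 0, coeff cy 0) * coeff ca 1
                 + (\<lambda>p. Db p + Eb p) (coeff ca 0, coeff cb 0, coeff cx 0, coeff cy 0) * coeff cb 1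
                 + (\<lambda>p. Dx p + Ex p) (coeff ca 0, coeff cb 0, coeff cx 0, coeff cy 0) * coeff cx 1
                 + (\<lambda>p. Dy p + Ey p) (coeff ca 0, coeff cb 0, coeff cx 0, coeff cy 0) * coeff cy 1" for ca cb cx cy
  proof -
    obtain q1 where q1: "\<forall>e. f (poly ca e, poly cb e, poly cx e, poly cy e) = poly q1 e"
      "coeff q1 1 = Da (coeff ca 0, coeff cb 0, coeff cx 0, coeff cy 0) * coeff ca 1
                 + Db (coeff ca 0, coeff cb 0, coeff cx 0, coeff cy 0) * coeff cb 1
                 + Dx (coeff ca 0, coeff cb 0, coeff cx 0, coeff cy 0) * coeff cx 1
                 + Dy (coeff ca 0, coeff cb 0, coeff cx 0, coeff cy 0) * coeff cy 1"
      using F2 by blast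
    obtain q2 where q2: "\<forall>e. g (poly ca e, poly cb e, poly cx e, poly cy e) = poly q2 e"
      "coeff q2 1 = Ea (coeff ca 0, coeff cb 0, coeff cx 0, coeff cy 0) * coeff ca 1
                 + Eb (coeff ca 0, coeff cb 0, coeff cx 0, coeff cy 0) * coeff cb 1
                 + Ex (coeff ca 0, coeff cb 0, coeff cx 0, coeff cy 0) * coeff cx 1
                 + Ey (coeff ca 0, coeff cb 0, coeff cx 0, coeff cy 0) * coeff cy 1"
      using G2 by blast
    show ?thesis using q1 q2 by (intro exI[of _ "q1 + q2"]) (simp add: algebra_simps)
  qed
  moreover have "(\<lambda>p. Dx p + Ex p) \<in> regular_fun" "(\<lambda>p. Dy p + Ey p) \<in> regular_fun"
    using F G by (auto intro: regular_fun.add)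
  ultimately show ?case
    apply -
    apply (rule exI[of _ "\<lambda>p. Da p + Ea p"], rule exI[of _ "\<lambda>p. Db p + Eb p"], rule exI[of _ "\<lambda>p. Dx p + Ex p"], rule exI[of _ "\<lambda>p. Dy p + Ey p"])
    by simp
next
  case (mult f g)
  then obtain Da Db Dx Dy Ea Eb Ex Ey where
    F: "Dx \<in> regular_fun" "Dy \<in> regular_fun" and F2: "\<And>ca cb cx cy. \<exists>q. (\<forall>e. f (poly ca e, poly cb e, poly cx e, poly cy e) = poly q e) \<and>
       coeff q 1 = Da (coeff ca 0, coeff cb 0, coeff cx 0, coeff cy 0) * coeff ca 1
                 + Db (coeff ca 0, coeff cb 0, coeff cx 0, coeff cy 0) * coeff cb 1
                 + Dx (coeff ca 0, coeff cb 0, coeff cx 0, coeff cy 0) * coeff cx 1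
                 + Dy (coeff ca 0, coeff cb 0, coeff cx 0, coeff cy 0) * coeff cy 1"
    and G: "Ex \<in> regular_fun" "Ey \<in> regular_fun" and G2: "\<And>ca cb cx cy. \<exists>q. (\<forall>e. g (poly ca e, poly cb e, poly cx e, poly cy e) = poly q e) \<and>
       coeff q 1 = Ea (coeff ca 0, coeff cb 0, coeff cx 0, coeff cy 0) * coeff ca 1
                 + Eb (coeff ca 0, coeff cb 0, coeff cx 0, coeff cy 0) * coeff cb 1
                 + Ex (coeff ca 0, coeff cb 0, coeff cx 0, coeff cy 0) * coeff cx 1
                 + Ey (coeff ca 0, coeff cb 0, coeff cx 0, coeff cy 0) * coeff cy 1"
    and fr: "f \<in> regular_fun" and gr: "g \<in> regular_fun"
    by metis
  have "\<exists>q. (\<forall>e. f (poly ca e, poly cb e, poly cx e, poly cy e) * g (poly ca e, poly cb e, poly cx e, poly cy e) = poly q e) \<and>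
       coeff q 1 = (\<lambda>p. f p * Ea p + g p * Da p) (coeff ca 0, coeff cb 0, coeff cx 0, coeff cy 0) * coeff ca 1
                 + (\<lambda>p. f p * Eb p + g p * Db p) (coeff ca 0, coeff cb 0, coeff cx 0, coeff cy 0) * coeff cb 1
                 + (\<lambda>p. f p * Ex p + g p * Dx p) (coeff ca 0, coeff cb 0, coeff cx 0, coeff cy 0) * coeff cx 1
                 + (\<lambda>p. f p * Ey p + g p * Dy p) (coeff ca 0, coeff cb 0, coeff cx 0, coeff cy 0) * coeff cy 1" for ca cb cx cy
  proof -
    obtain q1 where q1: "\<forall>e. f (poly ca e, poly cb e, poly cx e, poly cy e) = poly q1 e"
      "coeff q1 1 = Da (coeff ca 0, coeff cb 0, coeff cx 0, coeff cy 0) * coeff ca 1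
                 + Db (coeff ca 0, coeff cb 0, coeff cx 0, coeff cy 0) * coeff cb 1
                 + Dx (coeff ca 0, coeff cb 0, coeff cx 0, coeff cy 0) * coeff cx 1
                 + Dy (coeff ca 0, coeff cb 0, coeff cx 0, coeff cy 0) * coeff cy 1"
      using F2 by blast
    obtain q2 where q2: "\<forall>e. g (poly ca e, poly cb e, poly cx e, poly cy e) = poly q2 e"
      "coeff q2 1 = Ea (coeff ca 0, coeff cb 0, coeff cx 0, coeff cy 0) * coeff ca 1
                 + Eb (coeff ca 0, coeff cb 0, coeff cx 0, coeff cy 0) * coeff cb 1
                 + Ex (coeff ca 0, coeff cb 0, coeff cx 0, coeff cy 0) * coeff cx 1
                 + Ey (coeff ca 0, coeff cb 0, coeff cx 0, coeff cy 0) * coeff cy 1"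
      using G2 by blast
    have c1: "coeff q1 0 = f (coeff ca 0, coeff cb 0, coeff cx 0, coeff cy 0)"
      using q1(1)[rule_format, of 0] by (simp add: poly_0_coeff_0)
    have c2: "coeff q2 0 = g (coeff ca 0, coeff cb 0, coeff cx 0, coeff cy 0)"
      using q2(1)[rule_format, of 0] by (simp add: poly_0_coeff_0)
    show ?thesis using q1 q2 c1 c2 coeff_mult_1[of q1 q2] by (intro exI[of _ "q1 * q2"]) (simp add: algebra_simps)
  qed
  moreover have "(\<lambda>p. f p * Ex p + g p * Dx p) \<in> regular_fun" "(\<lambda>p. f p * Ey p + g p * Dy p) \<in> regular_fun"
    using F G fr gr by (auto intro!: regular_fun.add regular_fun.mult)
  ultimately show ?case
    apply -
    apply (rule exI[of _ "\<lambda>p. f p * Ea p + g p * Da p"], rule exI[of _ "\<lambda>p. f p * Eb p + g p * Db p"], rule exI[of _ "\<lambda>p. f p * Ex p + g p * Dx p"], rule exI[of _ "\<lambda>p. f p * Ey p + g p * Dy p"])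
    by simp
qed



abbreviation hc :: "real poly \<Rightarrow> complex poly" where "hc \<equiv> map_poly complex_of_real"

lemma hc_add: "hc (p + q) = hc p + hc q"
  by (rule poly_eqI) (simp add: coeff_map_poly)
lemma hc_diff: "hc (p - q) = hc p - hc q"
  by (rule poly_eqI) (simp add: coeff_map_poly)
lemma hc_pCons: "hc (pCons a p) = pCons (of_real a) (hc p)"
  by (simp add: map_poly_pCons)
lemma cnj_poly_hc: "cnj (poly (hc p) z) = poly (hc p) (cnj z)"
  by (subst poly_cnj_real) (auto simp: coeff_map_poly)

lemma reg_a: "(\<lambda>p. fst p) \<in> regular_fun"
proof -
  have "(\<lambda>p. fst p) = (\<lambda>(a::complex,b::complex,x::complex,y::complex). a)" by auto
  thus ?thesis using regular_fun.coord_a by simp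
qed
lemma reg_b: "(\<lambda>p. fst (snd p)) \<in> regular_fun"
proof -
  have "(\<lambda>p. fst (snd p)) = (\<lambda>(a::complex,b::complex,x::complex,y::complex). b)" by auto
  thus ?thesis using regular_fun.coord_b by simp
qed
lemma reg_x: "(\<lambda>p. fst (snd (snd p))) \<in> regular_fun"
proof -
  have "(\<lambda>p. fst (snd (snd p))) = (\<lambda>(a::complex,b::complex,x::complex,y::complex). x)" by auto
  thus ?thesis using regular_fun.coord_x by simp
qed
lemma reg_y: "(\<lambda>p. snd (snd (snd p))) \<in> regular_fun"
proof -
  have "(\<lambda>p. snd (snd (snd p))) = (\<lambda>(a::complex,b::complex,x::complex,y::complex). y)" by auto
  thus ?thesis using regular_fun.coord_y by simp
qed

lemma reg_diff: "f \<in> regular_fun \<Longrightarrow> g \<in> regular_fun \<Longrightarrow> (\<lambda>p. f p - g p) \<in> regular_fun"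
proof -
  assume f: "f \<in> regular_fun" and g: "g \<in> regular_fun"
  have "(\<lambda>p. f p + (-1) * g p) \<in> regular_fun"
    by (intro regular_fun.add regular_fun.mult f g regular_fun.const)
  thus ?thesis by simp
qed

lemma reg_pow: "f \<in> regular_fun \<Longrightarrow> (\<lambda>p. f p ^ n) \<in> regular_fun"
  by (induction n) (auto intro: regular_fun.const regular_fun.mult)

lemma reg_poly: "f \<in> regular_fun \<Longrightarrow> (\<lambda>p. poly P (f p)) \<in> regular_fun"
  by (induction P) (auto intro: regular_fun.const regular_fun.mult regular_fun.add)

lemma reg_comp: "f \<in> regular_fun \<Longrightarrow> regular_map \<psi> \<Longrightarrow> (\<lambda>p. f (\<psi> p)) \<in> regular_fun"
proof (induction rule: regular_fun.induct)
  case (const c) show ?case by (rule regular_fun.const)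
next
  case coord_a then show ?case by (simp add: regular_map_def case_prod_beta)
next
  case coord_b then show ?case by (simp add: regular_map_def case_prod_beta)
next
  case coord_x then show ?case by (simp add: regular_map_def case_prod_beta)
next
  case coord_y then show ?case by (simp add: regular_map_def case_prod_beta)
next
  case (add f g) then show ?case by (auto intro: regular_fun.add)
next
  case (mult f g) then show ?case by (auto intro: regular_fun.mult)
qed

lemma regular_map_comp: "regular_map \<psi>1 \<Longrightarrow> regular_map \<psi>2 \<Longrightarrow> regular_map (\<psi>2 \<circ> \<psi>1)"
  unfolding regular_map_def[of "\<psi>2 \<circ> \<psi>1"] using reg_comp[of _ \<psi>1]
  by (auto simp: regular_map_def)

lemma fe_sym: "forms_equivalent m1 m2 \<Longrightarrow> forms_equivalent m2 m1"
proof -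
  assume "forms_equivalent m1 m2"
  then obtain \<psi> where ra: "regular_automorphism \<psi>" and eq: "equivariant \<psi>" and m: "m2 = \<psi> \<circ> m1 \<circ> inv \<psi>"
    unfolding forms_equivalent_def by blast
  have bij: "bij \<psi>" using ra by (simp add: regular_automorphism_def)
  have ii: "inv (inv \<psi>) = \<psi>" using bij by (simp add: inv_inv_eq)
  have ra': "regular_automorphism (inv \<psi>)"
    using ra bij ii by (simp add: regular_automorphism_def bij_imp_bij_inv)
  have eq': "equivariant (inv \<psi>)"
    unfolding equivariant_def
  proof (intro allI impI)
    fix t p assume t: "(t::complex) \<noteq> 0"
    have "\<psi> (act t (inv \<psi> p)) = act t (\<psi> (inv \<psi> p))"
      using eq t unfolding equivariant_def by blast
    hence "\<psi> (act t (inv \<psi> p)) = act t p"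
      using bij by (simp add: bij_is_surj surj_f_inv_f)
    thus "inv \<psi> (act t p) = act t (inv \<psi> p)"
      using bij by (metis bij_inv_eq_iff)
  qed
  have "\<And>p. inv \<psi> (m2 (\<psi> p)) = m1 p" using m bij by (simp add: bij_is_inj inv_f_f)
  hence "m1 = inv \<psi> \<circ> m2 \<circ> inv (inv \<psi>)"
    unfolding ii by (simp add: fun_eq_iff)
  thus ?thesis using ra' eq' unfolding forms_equivalent_def by blast
qed

lemma fe_trans: "forms_equivalent m1 m2 \<Longrightarrow> forms_equivalent m2 m3 \<Longrightarrow> forms_equivalent m1 m3"
proof -
  assume "forms_equivalent m1 m2" "forms_equivalent m2 m3"
  then obtain \<psi>1 \<psi>2 where ra1: "regular_automorphism \<psi>1" and eq1: "equivariant \<psi>1" and m1: "m2 = \<psi>1 \<circ> m1 \<circ> inv \<psi>1"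
    and ra2: "regular_automorphism \<psi>2" and eq2: "equivariant \<psi>2" and m2: "m3 = \<psi>2 \<circ> m2 \<circ> inv \<psi>2"
    unfolding forms_equivalent_def by blast
  have b1: "bij \<psi>1" and b2: "bij \<psi>2" using ra1 ra2 by (auto simp: regular_automorphism_def)
  have inv: "inv (\<psi>2 \<circ> \<psi>1) = inv \<psi>1 \<circ> inv \<psi>2" using b1 b2 by (simp add: o_inv_distrib)
  have "regular_automorphism (\<psi>2 \<circ> \<psi>1)"
    using ra1 ra2 b1 b2 unfolding regular_automorphism_def inv
    by (auto intro: bij_comp regular_map_comp)
  moreover have "equivariant (\<psi>2 \<circ> \<psi>1)" using eq1 eq2 unfolding equivariant_def comp_def by metis
  moreover have "m3 = (\<psi>2 \<circ> \<psi>1) \<circ> m1 \<circ> inv (\<psi>2 \<circ> \<psi>1)"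
    unfolding inv m2 m1 by (simp add: o_assoc)
  ultimately show ?thesis unfolding forms_equivalent_def by blast
qed

lemma fe_intro:
  assumes r: "regular_map \<psi>" "regular_map \<psi>'"
    and inv1: "\<And>p. \<psi>' (\<psi> p) = p" and inv2: "\<And>p. \<psi> (\<psi>' p) = p"
    and eq: "equivariant \<psi>" and conj: "\<And>p. m2 (\<psi> p) = \<psi> (m1 p)"
  shows "forms_equivalent m1 m2"
proof -
  have bij: "bij \<psi>" by (rule o_bij[of \<psi>']) (auto simp: fun_eq_iff inv1 inv2)
  have iv: "inv \<psi> = \<psi>'"
    by (rule inv_equality) (use inv1 inv2 in auto)
  have "m2 = \<psi> \<circ> m1 \<circ> inv \<psi>"
    unfolding iv fun_eq_iff o_def by (metis conj inv2)
  moreover have "regular_automorphism \<psi>" using bij r iv by (simp add: regular_automorphism_def)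
  ultimately show ?thesis using eq unfolding forms_equivalent_def by blast
qed



lemma sum3: "(\<Sum>j<3. (z::complex)^j) = 1 + z + z^2"
  by (simp add: numeral_3_eq_3 power2_eq_square)

definition psiN :: "real poly \<Rightarrow> real poly \<Rightarrow> real poly \<Rightarrow> Y \<Rightarrow> Y" where
 "psiN h h' d = (\<lambda>(a,b,x,y). (a, b,
    (1 - (a*b)^2 * poly (hc h) (a*b) * poly (hc d) (a*b)) * x + a^3 * poly (hc d) (a*b) * y,
    b^3 * poly (hc d) (a*b) * (1 - (a*b) * poly (hc h) (a*b) * poly (hc h') (a*b)) * x
      + (1 + (a*b)^2 * poly (hc h') (a*b) * poly (hc d) (a*b)) * y))"

definition psiNi :: "real poly \<Rightarrow> real poly \<Rightarrow> real poly \<Rightarrow> Y \<Rightarrow> Y" where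
 "psiNi h h' d = (\<lambda>(a,b,x,y). (a, b,
    (1 + (a*b)^2 * poly (hc h') (a*b) * poly (hc d) (a*b)) * x - a^3 * poly (hc d) (a*b) * y,
    (1 - (a*b)^2 * poly (hc h) (a*b) * poly (hc d) (a*b)) * y
     - b^3 * poly (hc d) (a*b) * (1 - (a*b) * poly (hc h) (a*b) * poly (hc h') (a*b)) * x))"

lemma keyN:
  fixes A B X Y H H' D :: complex
  assumes hyp: "H' = H + (B*A)*D"
  shows "(1 - B * A * H'^2) *
    (B ^ 3 * D * (1 - B * A * H * H') * X + (1 + (B * A)^2 * H' * D) * Y) +
    B ^ 3 * H' ^ 3 * ((1 - (B * A)^2 * H * D) * X + A ^ 3 * D * Y) =
    (1 - (B * A)^2 * H * D) * ((1 - B * A * H^2) * Y + B ^ 3 * H ^ 3 * X) +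
    B ^ 3 * D * ((1 + B*A*H^2 + (B*A*H^2)^2) * X - A ^ 3 * H ^ 3 * Y) \<and>
    (1 + B*A*H'^2 + (B*A*H'^2)^2) * ((1 - (B * A)^2 * H * D) * X + A ^ 3 * D * Y) -
    A ^ 3 * H' ^ 3 * (B ^ 3 * D * (1 - B * A * H * H') * X + (1 + (B * A)^2 * H' * D) * Y) =
    A ^ 3 * D * (1 - B * A * H * H') * ((1 - B * A * H^2) * Y + B ^ 3 * H ^ 3 * X) +
    (1 + (B * A)^2 * H' * D) * ((1 + B*A*H^2 + (B*A*H^2)^2) * X - A ^ 3 * H ^ 3 * Y)"
  unfolding hyp by algebra

lemma keyInv:
  fixes a b x y H H' D :: complex
  assumes hyp: "H' = H + (a*b)*D"
  shows "(1 + (a*b)^2 * H' * D) * ((1 - (a*b)^2 * H * D) * x + a^3 * D * y) - a^3 * D *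
           (b^3 * D * (1 - (a*b) * H * H') * x + (1 + (a*b)^2 * H' * D) * y) = x"
    "(1 - (a*b)^2 * H * D) * (b^3 * D * (1 - (a*b) * H * H') * x + (1 + (a*b)^2 * H' * D) * y)
     - b^3 * D * (1 - (a*b) * H * H') * ((1 - (a*b)^2 * H * D) * x + a^3 * D * y) = y"
    "(1 - (a*b)^2 * H * D) * ((1 + (a*b)^2 * H' * D) * x - a^3 * D * y) + a^3 * D *
       ((1 - (a*b)^2 * H * D) * y - b^3 * D * (1 - (a*b) * H * H') * x) = x"
    "b^3 * D * (1 - (a*b) * H * H') * ((1 + (a*b)^2 * H' * D) * x - a^3 * D * y) +
       (1 + (a*b)^2 * H' * D) * ((1 - (a*b)^2 * H * D) * y - b^3 * D * (1 - (a*b) * H * H') * x) = y"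
  by (simp_all add: hyp algebra_simps power2_eq_square power3_eq_cube)

lemma equiv_same0:
  fixes h h' :: "real poly"
  assumes h0: "poly h 0 = poly h' 0"
  shows "forms_equivalent (mu h) (mu h')"
proof -
  obtain a0 d where pd: "h' - h = pCons a0 d" by (cases "h' - h") auto
  have "a0 = poly (h' - h) 0" using pd by simp
  hence a0: "a0 = 0" using h0 by simp
  have "hc h' = hc h + hc (pCons 0 d)"
    using pd a0 by (metis add_diff_cancel_left' diff_add_cancel hc_add)
  hence hyp: "\<And>z. poly (hc h') z = poly (hc h) z + z * poly (hc d) z"
    by (simp add: hc_pCons)
  show ?thesis
  proof (rule fe_intro[of "psiN h h' d" "psiNi h h' d"])
    show "regular_map (psiN h h' d)" unfolding regular_map_def psiN_def case_prod_beta fst_conv snd_conv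
      by (intro conjI reg_a reg_b regular_fun.add regular_fun.mult reg_diff reg_pow reg_poly regular_fun.const reg_x reg_y)
    show "regular_map (psiNi h h' d)" unfolding regular_map_def psiNi_def case_prod_beta fst_conv snd_conv
      by (intro conjI reg_a reg_b regular_fun.add regular_fun.mult reg_diff reg_pow reg_poly regular_fun.const reg_x reg_y)
    show "psiNi h h' d (psiN h h' d p) = p" for p
      using keyInv(1,2)[OF hyp] by (cases p) (simp add: psiN_def psiNi_def)
    show "psiN h h' d (psiNi h h' d p) = p" for p
      using keyInv(3,4)[OF hyp] by (cases p) (simp add: psiN_def psiNi_def)
    show "equivariant (psiN h h' d)"
      unfolding equivariant_def
    proof (intro allI impI)
      fix t and p :: Y assume t: "(t::complex) \<noteq> 0"
      obtain a b x y where p: "p = (a,b,x,y)" by (cases p)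
      have u: "t\<^sup>2 * a * (inverse t ^ 2 * b) = a * b" using t by (simp add: field_simps)
      show "psiN h h' d (act t p) = act t (psiN h h' d p)"
        unfolding p using t by (simp add: psiN_def act_def u) (simp add: field_simps)
    qed
    show "mu h' (psiN h h' d p) = psiN h h' d (mu h p)" for p
    proof -
      obtain a b x y where p: "p = (a,b,x,y)" by (cases p)
      show ?thesis unfolding p
        apply (simp add: mu_def phi_def mu0_def psiN_def Let_def cnj_poly_hc sum3 mult.commute[of "cnj a" "cnj b"])
        by (rule keyN) (rule hyp)
    qed
  qed
qed



lemma hc_smult: "hc (smult r p) = smult (of_real r) (hc p)"
  by (rule poly_eqI) (simp add: coeff_map_poly)

lemma poly_hc_pcompose: "poly (hc (pcompose h [:0, r:])) z = poly (hc h) (of_real r * z)"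
proof (induction h)
  case 0 then show ?case by simp
next
  case (pCons a p)
  have "pcompose (pCons a p) [:0, r:] = pCons a (smult r (pcompose p [:0, r:]))"
    by (simp add: pcompose_pCons)
  then show ?case using pCons by (simp add: hc_pCons hc_smult)
qed

lemma reg_divc: "f \<in> regular_fun \<Longrightarrow> (\<lambda>p. f p / k) \<in> regular_fun"
proof -
  assume f: "f \<in> regular_fun"
  have "(\<lambda>p. (1/k) * f p) \<in> regular_fun" by (intro regular_fun.mult regular_fun.const f)
  thus ?thesis by (simp add: divide_inverse mult.commute)
qed

definition scl :: "real poly \<Rightarrow> real \<Rightarrow> real poly" where
  "scl h c = smult (1/c) (pcompose h [:0, 1/c^2:])"

lemma poly_scl: "c \<noteq> 0 \<Longrightarrow> poly (hc (scl h c)) (of_real c * B * (of_real c * A)) = poly (hc h) (B * A) / of_real c"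
  unfolding scl_def hc_smult by (simp add: poly_hc_pcompose field_simps power2_eq_square)

lemma poly_scl0: "c \<noteq> 0 \<Longrightarrow> poly (scl h c) 0 = poly h 0 / c"
  unfolding scl_def by (simp add: poly_pcompose)

lemma equiv_scale:
  fixes h :: "real poly" and c :: real
  assumes c: "c \<noteq> 0"
  shows "forms_equivalent (mu h) (mu (scl h c))"
proof (rule fe_intro[of "\<lambda>(a,b,x,y). (complex_of_real c * a, complex_of_real c * b, x, y)" "\<lambda>(a,b,x,y). (a / complex_of_real c, b / complex_of_real c, x, y)"])
  show "regular_map (\<lambda>(a,b,x,y). (complex_of_real c * a, complex_of_real c * b, x, y))"
    unfolding regular_map_def case_prod_beta fst_conv snd_conv
    by (intro conjI reg_a reg_b regular_fun.mult regular_fun.const reg_x reg_y)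
  show "regular_map (\<lambda>(a,b,x,y). (a / complex_of_real c, b / complex_of_real c, x, y))"
    unfolding regular_map_def case_prod_beta fst_conv snd_conv
    by (intro conjI reg_a reg_b reg_divc reg_x reg_y)
  show "(\<lambda>(a,b,x,y). (a / complex_of_real c, b / complex_of_real c, x, y)) ((\<lambda>(a,b,x,y). (complex_of_real c * a, complex_of_real c * b, x, y)) p) = p" for p
    using c by (cases p) (simp add: field_simps)
  show "(\<lambda>(a,b,x,y). (complex_of_real c * a, complex_of_real c * b, x, y)) ((\<lambda>(a,b,x,y). (a / complex_of_real c, b / complex_of_real c, x, y)) p) = p" for p
    using c by (cases p) simp
  show "equivariant (\<lambda>(a,b,x,y). (complex_of_real c * a, complex_of_real c * b, x, y))"
    unfolding equivariant_def act_def by (auto simp: algebra_simps)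
  show "mu (scl h c) ((\<lambda>(a,b,x,y). (complex_of_real c * a, complex_of_real c * b, x, y)) p) = (\<lambda>(a,b,x,y). (complex_of_real c * a, complex_of_real c * b, x, y)) (mu h p)" for p
  proof -
    obtain a b x y where p: "p = (a,b,x,y)" by (cases p)
    show ?thesis unfolding p
      using c apply (simp add: mu_def phi_def mu0_def Let_def poly_scl sum3)
      by (simp add: field_simps power2_eq_square power3_eq_cube)
  qed
qed



definition JET :: "(Y \<Rightarrow> complex) \<Rightarrow> (Y \<Rightarrow> complex) \<Rightarrow> (Y \<Rightarrow> complex) \<Rightarrow> (Y \<Rightarrow> complex) \<Rightarrow> (Y \<Rightarrow> complex) \<Rightarrow> bool" where
  "JET f Da Db Dx Dy \<longleftrightarrow> (\<forall>ca cb cx cy. \<exists>q. (\<forall>e. f (poly ca e, poly cb e, poly cx e, poly cy e) = poly q e) \<and>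
       coeff q 1 = Da (coeff ca 0, coeff cb 0, coeff cx 0, coeff cy 0) * coeff ca 1
                 + Db (coeff ca 0, coeff cb 0, coeff cx 0, coeff cy 0) * coeff cb 1
                 + Dx (coeff ca 0, coeff cb 0, coeff cx 0, coeff cy 0) * coeff cx 1
                 + Dy (coeff ca 0, coeff cb 0, coeff cx 0, coeff cy 0) * coeff cy 1)"

lemma jet': "f \<in> regular_fun \<Longrightarrow> \<exists>Da Db Dx Dy. Dx \<in> regular_fun \<and> Dy \<in> regular_fun \<and> JET f Da Db Dx Dy"
  unfolding JET_def by (rule jet)

lemma restr: "f \<in> regular_fun \<Longrightarrow> \<exists>q. \<forall>e. f (poly ca e, poly cb e, poly cx e, poly cy e) = poly q e"
  using jet by blast

lemma restr_diag: "f \<in> regular_fun \<Longrightarrow> \<exists>q. \<forall>s. f (s, s, 0, 0) = poly q s"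
  using restr[of f "[:0,1:]" "[:0,1:]" 0 0] by simp

lemma restr_line: "f \<in> regular_fun \<Longrightarrow> \<exists>q. \<forall>v. f (1, v, 0, 0) = poly q v"
  using restr[of f "[:1:]" "[:0,1:]" 0 0] by simp

lemma lin:
  assumes "JET f Da Db Dx Dy"
  shows "\<exists>q. (\<forall>e. f (a, b, e*X, e*Y) = poly q e) \<and> coeff q 1 = Dx (a,b,0,0) * X + Dy (a,b,0,0) * Y"
proof -
  obtain q where q: "\<forall>e. f (poly [:a:] e, poly [:b:] e, poly [:0,X:] e, poly [:0,Y:] e) = poly q e"
    "coeff q 1 = Da (coeff [:a:] 0, coeff [:b:] 0, coeff [:0,X:] 0, coeff [:0,Y:] 0) * coeff [:a:] 1
                 + Db (coeff [:a:] 0, coeff [:b:] 0, coeff [:0,X:] 0, coeff [:0,Y:] 0) * coeff [:b:] 1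
                 + Dx (coeff [:a:] 0, coeff [:b:] 0, coeff [:0,X:] 0, coeff [:0,Y:] 0) * coeff [:0,X:] 1
                 + Dy (coeff [:a:] 0, coeff [:b:] 0, coeff [:0,X:] 0, coeff [:0,Y:] 0) * coeff [:0,Y:] 1"
    using assms unfolding JET_def by blast
  show ?thesis using q by (intro exI[of _ q]) simp
qed

lemma peq_all:
  fixes q q' :: "complex poly"
  assumes "\<And>e. poly q e = poly q' e" shows "q = q'"
proof -
  have "poly q = poly q'" by (intro ext assms)
  thus ?thesis by (simp add: poly_eq_poly_eq_iff)
qed

lemma peq_inf:
  fixes q q' :: "complex poly"
  assumes inf: "infinite S" and eq: "\<And>e. e \<in> S \<Longrightarrow> poly q e = poly q' e"
  shows "q = q'"
proof (rule ccontr)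
  assume "q \<noteq> q'"
  hence "q - q' \<noteq> 0" by simp
  hence "finite {x. poly (q - q') x = 0}" by (rule poly_roots_finite)
  moreover have "S \<subseteq> {x. poly (q - q') x = 0}" using eq by auto
  ultimately show False using inf finite_subset by blast
qed

lemma inf_reals: "infinite (range (complex_of_real))"
proof
  assume "finite (range complex_of_real)"
  moreover have "inj complex_of_real" by (auto intro: injI)
  ultimately have "finite (UNIV :: real set)" using finite_imageD by blast
  thus False using infinite_UNIV_char_0[where 'a=real] by simp
qed

lemma inf_nz: "infinite (UNIV - {0::complex})"
  using infinite_UNIV_char_0 by auto

lemma peq_real: "(\<And>r. poly q (complex_of_real r) = poly q' (complex_of_real r)) \<Longrightarrow> q = q'"
  by (rule peq_inf[OF inf_reals]) auto

lemma peq_nz: "(\<And>e. e \<noteq> 0 \<Longrightarrow> poly q e = poly q' (e::complex)) \<Longrightarrow> q = q'"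
  by (rule peq_inf[OF inf_nz]) auto

lemma poly_rel: "(\<And>e. poly q e = k * poly q' e) \<Longrightarrow> coeff q 1 = k * coeff (q'::complex poly) 1"
proof -
  assume "\<And>e. poly q e = k * poly q' e"
  hence "q = smult k q'" by (intro peq_all) simp
  thus ?thesis by simp
qed

lemma even_coeff1:
  fixes q :: "complex poly"
  assumes "\<And>e. poly q (-e) = poly q e" shows "coeff q 1 = 0"
proof -
  have "q = pcompose q [:0, -1:]" by (rule peq_all) (simp add: poly_pcompose assms)
  hence "coeff q 1 = (-1) ^ 1 * coeff q 1" by (metis coeff_pcompose_linear)
  thus ?thesis by simp
qed

lemma even_deg:
  fixes q :: "complex poly"
  assumes "\<And>e. poly q (-e) = poly q e" "q \<noteq> 0" shows "even (degree q)"
proof -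
  have "q = pcompose q [:0, -1:]" by (rule peq_all) (simp add: poly_pcompose assms)
  hence "coeff q (degree q) = (-1) ^ degree q * coeff q (degree q)" by (metis coeff_pcompose_linear)
  moreover have "coeff q (degree q) \<noteq> 0" using assms(2) by simp
  ultimately have "(-1::complex) ^ degree q = 1" by simp
  thus ?thesis by (auto simp: minus_one_power_iff split: if_splits)
qed

lemma odd_deg:
  fixes q :: "complex poly"
  assumes "\<And>e. poly q (-e) = - poly q e" "q \<noteq> 0" shows "odd (degree q)"
proof -
  have "-q = pcompose q [:0, -1:]" by (rule peq_all) (simp add: poly_pcompose assms)
  hence "- coeff q (degree q) = (-1) ^ degree q * coeff q (degree q)" by (metis coeff_pcompose_linear coeff_minus)
  moreover have "coeff q (degree q) \<noteq> 0" using assms(2) by simp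
  ultimately have "((-1::complex) ^ degree q + 1) * coeff q (degree q) = 0"
    by (metis add.left_inverse distrib_right mult_1)
  hence "(-1::complex) ^ degree q + 1 = 0" using \<open>coeff q (degree q) \<noteq> 0\<close> by simp
  hence "(-1::complex) ^ degree q = -1" by (simp add: eq_neg_iff_add_eq_0)
  thus ?thesis by (auto simp: minus_one_power_iff split: if_splits)
qed

definition Nm :: "complex poly \<Rightarrow> complex poly" where "Nm p = p * map_poly cnj p"

lemma Nm_0: "Nm 0 = 0" by (simp add: Nm_def)

lemma degree_Nm: "p \<noteq> 0 \<Longrightarrow> degree (Nm p) = 2 * degree p"
proof -
  assume p: "p \<noteq> 0"
  have d: "degree (map_poly cnj p) = degree p" by (rule degree_map_poly) simp
  have "map_poly cnj p \<noteq> 0" using p by (simp add: map_poly_eq_0_iff)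
  thus ?thesis using p d by (simp add: Nm_def degree_mult_eq)
qed

lemma poly_Nm_real: "poly (Nm p) (complex_of_real r) = poly p (of_real r) * cnj (poly p (of_real r))"
  by (simp add: Nm_def)

lemma kernel2:
  fixes a b c d :: complex
  assumes "a * d - b * c = 0"
  shows "\<exists>X Y. (X \<noteq> 0 \<or> Y \<noteq> 0) \<and> a * X + b * Y = 0 \<and> c * X + d * Y = 0"
proof (cases "c \<noteq> 0 \<or> d \<noteq> 0")
  case True
  thus ?thesis using assms apply - apply (rule exI[of _ d], rule exI[of _ "-c"]) by (auto simp: algebra_simps)
next
  case False
  show ?thesis
  proof (cases "a \<noteq> 0 \<or> b \<noteq> 0")
    case True
    thus ?thesis using False apply - apply (rule exI[of _ b], rule exI[of _ "-a"]) by (auto simp: algebra_simps)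
  next
    case False2: False
    thus ?thesis using False apply - apply (rule exI[of _ 1], rule exI[of _ 0]) by auto
  qed
qed

lemma act_m1: "act (-1) (a,b,x,y) = (a,b,-x,-y)" by (simp add: act_def)
lemma act_i: "act \<i> (a,b,x,y) = (-a,-b,-\<i>*x,\<i>*y)" by (simp add: act_def power3_eq_cube)



lemma keyF:
  fixes a b A B s H :: complex
  shows "(a + b*(s*H)) * (A + B*(s*H)) - (a*(s*H) + b*(1 + s*s*H^2)) * (A*(s*H) + B*(1 + s*s*H^2))
       = a * (A*(1 - s*s*H^2) - B*(s^3*H^3)) - b * (A*(s^3*H^3) + B*(1 + s*s*H^2 + (s*s*H^2)^2))"
  by (simp add: algebra_simps power2_eq_square power3_eq_cube)

lemma degree_diff_neq:
  fixes p q :: "'a::ab_group_add poly"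
  assumes "degree p \<noteq> degree q"
  shows "degree (p - q) = max (degree p) (degree q)"
proof (cases "degree p < degree q")
  case True
  hence "degree (p + (-q)) = degree (-q)" by (intro degree_add_eq_right) simp
  thus ?thesis using True by simp
next
  case False
  hence "degree (-q) < degree p" using assms by simp
  hence "degree (p + (-q)) = degree p" by (rule degree_add_eq_left)
  thus ?thesis using False by simp
qed

lemma poly_hc0: "poly (hc p) 0 = complex_of_real (poly p 0)"
  by (simp add: poly_0_coeff_0 coeff_map_poly)

lemma not_equiv0:
  fixes h :: "real poly"
  assumes h0: "poly h 0 \<noteq> 0" and fe: "forms_equivalent (mu h) mu0"
  shows False
proof -
  obtain \<psi> where ra: "regular_automorphism \<psi>" and eq: "equivariant \<psi>" and m: "mu0 = \<psi> \<circ> mu h \<circ> inv \<psi>"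
    using fe unfolding forms_equivalent_def by blast
  have bij: "bij \<psi>" and rm: "regular_map \<psi>" and rmi: "regular_map (inv \<psi>)"
    using ra by (auto simp: regular_automorphism_def)
  have E2: "\<And>p. inv \<psi> (\<psi> p) = p" using bij by (metis bij_is_inj inv_f_f)
  have E1: "\<And>p. mu0 (\<psi> p) = \<psi> (mu h p)" using m E2 by (metis comp_apply)
  define f1 where "f1 = (\<lambda>p. fst (\<psi> p))"
  define f2 where "f2 = (\<lambda>p. fst (snd (\<psi> p)))"
  define f3 where "f3 = (\<lambda>p. fst (snd (snd (\<psi> p))))"
  define f4 where "f4 = (\<lambda>p. snd (snd (snd (\<psi> p))))"
  define g3 where "g3 = (\<lambda>p. fst (snd (snd (inv \<psi> p))))"
  define g4 where "g4 = (\<lambda>p. snd (snd (snd (inv \<psi> p))))"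
  have r: "f1 \<in> regular_fun" "f2 \<in> regular_fun" "f3 \<in> regular_fun" "f4 \<in> regular_fun" "g3 \<in> regular_fun" "g4 \<in> regular_fun"
    using rm rmi unfolding regular_map_def f1_def f2_def f3_def f4_def g3_def g4_def by auto
  have psi_split: "\<And>p. \<psi> p = (f1 p, f2 p, f3 p, f4 p)" by (simp add: f1_def f2_def f3_def f4_def)
  obtain Da3 Db3 Dx3 Dy3 where R3: "Dx3 \<in> regular_fun" "Dy3 \<in> regular_fun" and J3: "JET f3 Da3 Db3 Dx3 Dy3"
    using jet'[OF r(3)] by blast
  obtain Da4 Db4 Dx4 Dy4 where R4: "Dx4 \<in> regular_fun" "Dy4 \<in> regular_fun" and J4: "JET f4 Da4 Db4 Dx4 Dy4"
    using jet'[OF r(4)] by blast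
  obtain Ga3 Gb3 Gx3 Gy3 where JG3: "JET g3 Ga3 Gb3 Gx3 Gy3" using jet'[OF r(5)] by blast
  obtain Ga4 Gb4 Gx4 Gy4 where JG4: "JET g4 Ga4 Gb4 Gx4 Gy4" using jet'[OF r(6)] by blast
  have EQ: "\<And>t p. t \<noteq> 0 \<Longrightarrow> \<psi> (act t p) = act t (\<psi> p)" using eq unfolding equivariant_def by blast
  have f1act: "f1 (act t p) = t^2 * f1 p" if "t \<noteq> 0" for t p
  proof -
    have "f1 (act t p) = fst (act t (\<psi> p))" using EQ[OF that] by (simp add: f1_def)
    also have "\<dots> = t^2 * f1 p" by (simp add: act_def case_prod_beta f1_def)
    finally show ?thesis .
  qed
  have f2act: "f2 (act t p) = inverse t ^ 2 * f2 p" if "t \<noteq> 0" for t p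
  proof -
    have "f2 (act t p) = (\<lambda>p. fst (snd p)) (act t (\<psi> p))" using EQ[OF that] by (simp add: f2_def)
    also have "\<dots> = inverse t ^ 2 * f2 p" by (simp add: act_def case_prod_beta f2_def)
    finally show ?thesis .
  qed
  have f3act: "f3 (act t p) = t^3 * f3 p" if "t \<noteq> 0" for t p
  proof -
    have "f3 (act t p) = (\<lambda>p. fst (snd (snd p))) (act t (\<psi> p))" using EQ[OF that] by (simp add: f3_def)
    also have "\<dots> = t^3 * f3 p" by (simp add: act_def case_prod_beta f3_def)
    finally show ?thesis .
  qed
  have f4act: "f4 (act t p) = inverse t ^ 3 * f4 p" if "t \<noteq> 0" for t p
  proof -
    have "f4 (act t p) = (\<lambda>p. snd (snd (snd p))) (act t (\<psi> p))" using EQ[OF that] by (simp add: f4_def)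
    also have "\<dots> = inverse t ^ 3 * f4 p" by (simp add: act_def case_prod_beta f4_def)
    finally show ?thesis .
  qed
  define al where "al = (\<lambda>s. Dx3 (s,s,0,0))"
  define be where "be = (\<lambda>s. Dy3 (s,s,0,0))"
  define ga where "ga = (\<lambda>s. Dx4 (s,s,0,0))"
  define de where "de = (\<lambda>s. Dy4 (s,s,0,0))"

  have parA: "al (-s) = al s \<and> be (-s) = - be s" for s
  proof -
    have key: "al (-s) * (-\<i>*X) + be (-s) * (\<i>*Y) = -\<i> * (al s * X + be s * Y)" for X Y
    proof -
      obtain q where q: "\<forall>e. f3 (s, s, e*X, e*Y) = poly q e" "coeff q 1 = Dx3 (s,s,0,0) * X + Dy3 (s,s,0,0) * Y"
        using lin[OF J3] by blast
      obtain q' where q': "\<forall>e. f3 (-s, -s, e*(-\<i>*X), e*(\<i>*Y)) = poly q' e"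
          "coeff q' 1 = Dx3 (-s,-s,0,0) * (-\<i>*X) + Dy3 (-s,-s,0,0) * (\<i>*Y)"
        using lin[OF J3] by blast
      have "poly q' e = (-\<i>) * poly q e" for e
      proof -
        have A: "act \<i> (s, s, e*X, e*Y) = (-s, -s, e*(-\<i>*X), e*(\<i>*Y))" by (simp add: act_i algebra_simps)
        have "f3 (act \<i> (s, s, e*X, e*Y)) = \<i>^3 * f3 (s, s, e*X, e*Y)" by (rule f3act) simp
        hence "f3 (-s, -s, e*(-\<i>*X), e*(\<i>*Y)) = \<i>^3 * f3 (s, s, e*X, e*Y)" unfolding A .
        thus ?thesis using q q' by (simp add: power3_eq_cube)
      qed
      hence "coeff q' 1 = (-\<i>) * coeff q 1" by (rule poly_rel)
      thus ?thesis using q q' by (simp add: al_def be_def)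
    qed
    have "be (- s) * \<i> = (- be s) * \<i>" using key[of 0 1] by (simp add: algebra_simps)
    hence "be (- s) = - be s" by (metis mult_cancel_right complex_i_not_zero)
    with key[of 1 0] show ?thesis by simp
  qed

  obtain Pr where Pr: "\<And>v. Dy3 (1, v, 0, 0) = poly Pr v" using restr_line[OF R3(2)] by blast
  have stepB: "be s = s^3 * poly Pr (s^2)" if s: "s \<noteq> 0" for s
  proof -
    define t where "t = csqrt s"
    have t2: "t^2 = s" by (simp add: t_def)
    have t0: "t \<noteq> 0" using s by (simp add: t_def)
    obtain q where q: "\<forall>e. f3 (s, s, e*0, e*1) = poly q e" "coeff q 1 = Dx3 (s,s,0,0) * 0 + Dy3 (s,s,0,0) * 1"
      using lin[OF J3] by blast
    obtain q' where q': "\<forall>e. f3 (1, s^2, e*0, e*t^3) = poly q' e" "coeff q' 1 = Dx3 (1,s^2,0,0) * 0 + Dy3 (1,s^2,0,0) * t^3"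
      using lin[OF J3] by blast
    have "poly q e = t^3 * poly q' e" for e
    proof -
      have "act t (1, (t^2)^2, e*0, e*t^3) = (t^2, t^2, e*0, e*1)" using t0
        by (simp add: act_def field_simps power2_eq_square power3_eq_cube)
      hence A: "act t (1, s^2, e*0, e*t^3) = (s, s, e*0, e*1)" using t2 by simp
      have "f3 (act t (1, s^2, e*0, e*t^3)) = t^3 * f3 (1, s^2, e*0, e*t^3)" by (rule f3act[OF t0])
      hence "f3 (s, s, e*0, e*1) = t^3 * f3 (1, s^2, e*0, e*t^3)" unfolding A .
      thus ?thesis using q q' by simp
    qed
    hence "coeff q 1 = t^3 * coeff q' 1" by (rule poly_rel)
    hence "be s = t^3 * (poly Pr (s^2) * t^3)" using q q' by (simp add: be_def Pr)
    also have "\<dots> = (t^2)^3 * poly Pr (s^2)" by (simp add: power_mult[symmetric] algebra_simps)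
    finally show ?thesis using t2 by simp
  qed

  have stepC: "al s * (s^3*hh^3) + be s * (1 + s*s*hh^2 + (s*s*hh^2)^2) = cnj (ga s) \<and>
               al s * (1 - s*s*hh^2) - be s * (s^3*hh^3) = cnj (de s)"
    if sr: "s = complex_of_real r" and hh: "hh = poly (hc h) (s*s)" for r s hh
  proof -
    have key: "al s * X1 + be s * Y1 = cnj (ga s * X + de s * Y)"
      if X1: "X1 = (1 - s*s*hh^2) * cnj Y + s^3*hh^3 * cnj X"
        and Y1: "Y1 = -(s^3*hh^3) * cnj Y + (1 + s*s*hh^2 + (s*s*hh^2)^2) * cnj X" for X Y X1 Y1
    proof -
      obtain q3 where q3: "\<forall>e. f3 (s,s,e*X1,e*Y1) = poly q3 e" "coeff q3 1 = Dx3 (s,s,0,0)*X1 + Dy3 (s,s,0,0)*Y1"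
        using lin[OF J3] by blast
      obtain q4 where q4: "\<forall>e. f4 (s,s,e*X,e*Y) = poly q4 e" "coeff q4 1 = Dx4 (s,s,0,0)*X + Dy4 (s,s,0,0)*Y"
        using lin[OF J4] by blast
      have "poly q3 (of_real \<epsilon>) = poly (map_poly cnj q4) (of_real \<epsilon>)" for \<epsilon>
      proof -
        define e where "e = complex_of_real \<epsilon>"
        have mh: "mu h (s, s, e*X, e*Y) = (s, s, e*X1, e*Y1)"
          unfolding X1 Y1 e_def sr hh
          apply (simp add: mu_def mu0_def phi_def Let_def sum3)
          by (simp add: algebra_simps)
        have "fst (snd (snd (mu0 (\<psi> (s,s,e*X,e*Y))))) = cnj (f4 (s,s,e*X,e*Y))"
          by (simp add: mu0_def f4_def case_prod_beta)
        moreover have "fst (snd (snd (\<psi> (mu h (s,s,e*X,e*Y))))) = f3 (s,s,e*X1,e*Y1)"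
          by (simp add: mh f3_def)
        ultimately have "f3 (s,s,e*X1,e*Y1) = cnj (f4 (s,s,e*X,e*Y))" using E1 by metis
        thus ?thesis using q3 q4 by (simp add: e_def)
      qed
      hence "q3 = map_poly cnj q4" by (rule peq_real)
      hence "coeff q3 1 = cnj (coeff q4 1)" by (simp add: coeff_map_poly)
      thus ?thesis using q3 q4 by (simp add: al_def be_def ga_def de_def)
    qed
    have k1: "al s * (s^3*hh^3) + be s * (1 + s*s*hh^2 + (s*s*hh^2)^2) = cnj (ga s)"
      using key[of "s^3*hh^3" 0 1 "1 + s*s*hh^2 + (s*s*hh^2)^2"] by simp
    have k2: "al s * (1 - s*s*hh^2) - be s * (s^3*hh^3) = cnj (de s)"
      using key[of "1 - s*s*hh^2" 1 0 "-(s^3*hh^3)"] by simp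
    show ?thesis using k1 k2 by simp
  qed

  have stepD: "al s * de s - be s * ga s \<noteq> 0" for s
  proof
    assume "al s * de s - be s * ga s = 0"
    then obtain X Y where XY: "X \<noteq> 0 \<or> Y \<noteq> 0" "al s * X + be s * Y = 0" "ga s * X + de s * Y = 0"
      using kernel2 by blast
    obtain q1 where q1: "\<forall>e. f1 (poly [:s:] e, poly [:s:] e, poly [:0,X:] e, poly [:0,Y:] e) = poly q1 e"
      using restr[OF r(1)] by blast
    obtain q2 where q2: "\<forall>e. f2 (poly [:s:] e, poly [:s:] e, poly [:0,X:] e, poly [:0,Y:] e) = poly q2 e"
      using restr[OF r(2)] by blast
    have q1': "\<And>e. f1 (s, s, e*X, e*Y) = poly q1 e" using q1 by simp
    have q2': "\<And>e. f2 (s, s, e*X, e*Y) = poly q2 e" using q2 by simp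
    obtain q3 where q3: "\<forall>e. f3 (s,s,e*X,e*Y) = poly q3 e" "coeff q3 1 = Dx3 (s,s,0,0)*X + Dy3 (s,s,0,0)*Y"
      using lin[OF J3] by blast
    obtain q4 where q4: "\<forall>e. f4 (s,s,e*X,e*Y) = poly q4 e" "coeff q4 1 = Dx4 (s,s,0,0)*X + Dy4 (s,s,0,0)*Y"
      using lin[OF J4] by blast
    have am: "\<And>e. act (-1) (s,s,e*X,e*Y) = (s,s,(-e)*X,(-e)*Y)" by (simp add: act_m1)
    have c1: "coeff q1 1 = 0"
    proof (rule even_coeff1)
      fix e
      have "f1 (act (-1) (s,s,e*X,e*Y)) = (-1)^2 * f1 (s,s,e*X,e*Y)" by (rule f1act) simp
      hence "f1 (s,s,(-e)*X,(-e)*Y) = f1 (s,s,e*X,e*Y)" unfolding am by simp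
      hence "f1 (s,s,(-e)*X,(-e)*Y) = f1 (s,s,e*X,e*Y)" .
      thus "poly q1 (-e) = poly q1 e" by (metis q1')
    qed
    have c2: "coeff q2 1 = 0"
    proof (rule even_coeff1)
      fix e
      have "f2 (act (-1) (s,s,e*X,e*Y)) = inverse (-1) ^ 2 * f2 (s,s,e*X,e*Y)" by (rule f2act) simp
      hence "f2 (s,s,(-e)*X,(-e)*Y) = f2 (s,s,e*X,e*Y)" unfolding am by simp
      hence "f2 (s,s,(-e)*X,(-e)*Y) = f2 (s,s,e*X,e*Y)" .
      thus "poly q2 (-e) = poly q2 e" by (metis q2')
    qed
    have c3: "coeff q3 1 = 0" using q3 XY by (simp add: al_def be_def)
    have c4: "coeff q4 1 = 0" using q4 XY by (simp add: ga_def de_def)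
    have path: "\<And>e. \<psi> (s,s,e*X,e*Y) = (poly q1 e, poly q2 e, poly q3 e, poly q4 e)"
      using psi_split q1' q2' q3 q4 by simp
    have "X = 0"
    proof -
      obtain Q where Q: "\<forall>e. g3 (poly q1 e, poly q2 e, poly q3 e, poly q4 e) = poly Q e"
        "coeff Q 1 = Ga3 (coeff q1 0, coeff q2 0, coeff q3 0, coeff q4 0) * coeff q1 1
                 + Gb3 (coeff q1 0, coeff q2 0, coeff q3 0, coeff q4 0) * coeff q2 1
                 + Gx3 (coeff q1 0, coeff q2 0, coeff q3 0, coeff q4 0) * coeff q3 1
                 + Gy3 (coeff q1 0, coeff q2 0, coeff q3 0, coeff q4 0) * coeff q4 1"
        using JG3 unfolding JET_def by blast
      have "coeff Q 1 = 0" using Q(2) c1 c2 c3 c4 by simp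
      moreover have "poly Q e = poly [:0, X:] e" for e
      proof -
        have "g3 (\<psi> (s,s,e*X,e*Y)) = e * X" using E2 by (simp add: g3_def)
        thus ?thesis using Q(1) path by simp
      qed
      hence "Q = [:0,X:]" by (rule peq_all)
      ultimately show ?thesis by simp
    qed
    moreover have "Y = 0"
    proof -
      obtain Q where Q: "\<forall>e. g4 (poly q1 e, poly q2 e, poly q3 e, poly q4 e) = poly Q e"
        "coeff Q 1 = Ga4 (coeff q1 0, coeff q2 0, coeff q3 0, coeff q4 0) * coeff q1 1
                 + Gb4 (coeff q1 0, coeff q2 0, coeff q3 0, coeff q4 0) * coeff q2 1
                 + Gx4 (coeff q1 0, coeff q2 0, coeff q3 0, coeff q4 0) * coeff q3 1
                 + Gy4 (coeff q1 0, coeff q2 0, coeff q3 0, coeff q4 0) * coeff q4 1"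
        using JG4 unfolding JET_def by blast
      have "coeff Q 1 = 0" using Q(2) c1 c2 c3 c4 by simp
      moreover have "poly Q e = poly [:0, Y:] e" for e
      proof -
        have "g4 (\<psi> (s,s,e*X,e*Y)) = e * Y" using E2 by (simp add: g4_def)
        thus ?thesis using Q(1) path by simp
      qed
      hence "Q = [:0,Y:]" by (rule peq_all)
      ultimately show ?thesis by simp
    qed
    ultimately show False using XY(1) by simp
  qed

  obtain Pa where Pa: "\<And>s. Dx3 (s,s,0,0) = poly Pa s" using restr_diag[OF R3(1)] by blast
  obtain Pb where Pb: "\<And>s. Dy3 (s,s,0,0) = poly Pb s" using restr_diag[OF R3(2)] by blast
  obtain Pc where Pc: "\<And>s. Dx4 (s,s,0,0) = poly Pc s" using restr_diag[OF R4(1)] by blast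
  obtain Pd where Pd: "\<And>s. Dy4 (s,s,0,0) = poly Pd s" using restr_diag[OF R4(2)] by blast
  define Pdet where "Pdet = Pa * Pd - Pb * Pc"
  have pdet: "poly Pdet s = al s * de s - be s * ga s" for s
    by (simp add: Pdet_def al_def be_def ga_def de_def Pa Pb Pc Pd)
  have "constant (poly Pdet)"
  proof (rule ccontr)
    assume "\<not> constant (poly Pdet)"
    then obtain z where "poly Pdet z = 0" using fundamental_theorem_of_algebra by blast
    thus False using stepD pdet by metis
  qed
  hence "degree Pdet = 0" by (simp add: constant_degree)
  hence PdetC: "Pdet = [:coeff Pdet 0:]" by (metis degree_0_id)
  define d where "d = coeff Pdet 0"
  have detd: "al s * de s - be s * ga s = d" for s
    using pdet[of s] PdetC by (metis d_def poly_pCons poly_0 mult_zero_right add.right_neutral)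

  define Hc where "Hc = pcompose (hc h) [:0,0,1:]"
  have Hc: "poly Hc s = poly (hc h) (s*s)" for s by (simp add: Hc_def poly_pcompose)
  define PB11 where "PB11 = Pa + Pb * [:0,1:] * Hc"
  define PB12 where "PB12 = Pa * [:0,1:] * Hc + Pb * (1 + [:0,0,1:] * Hc^2)"
  have B11: "poly PB11 s = al s + be s * (s * poly (hc h) (s*s))" for s
    by (simp add: PB11_def Hc al_def be_def Pa Pb)
  have B12: "poly PB12 s = al s * (s * poly (hc h) (s*s)) + be s * (1 + s*s*(poly (hc h) (s*s))^2)" for s
    by (simp add: PB12_def Hc al_def be_def Pa Pb algebra_simps)
  have NmEq: "Nm PB11 - Nm PB12 = [:d:]"
  proof (rule peq_real)
    fix r
    define s where "s = complex_of_real r"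
    define hh where "hh = poly (hc h) (s*s)"
    have hhr: "cnj hh = hh" by (simp add: hh_def cnj_poly_hc s_def)
    have sr: "cnj s = s" by (simp add: s_def)
    have C: "al s * (s^3*hh^3) + be s * (1 + s*s*hh^2 + (s*s*hh^2)^2) = cnj (ga s) \<and>
               al s * (1 - s*s*hh^2) - be s * (s^3*hh^3) = cnj (de s)"
      by (rule stepC[OF s_def hh_def])
    have gaE: "ga s = cnj (al s) * (s^3*hh^3) + cnj (be s) * (1 + s*s*hh^2 + (s*s*hh^2)^2)"
      using arg_cong[OF conjunct1[OF C], of cnj] by (simp add: hhr sr)
    have deE: "de s = cnj (al s) * (1 - s*s*hh^2) - cnj (be s) * (s^3*hh^3)"
      using arg_cong[OF conjunct2[OF C], of cnj] by (simp add: hhr sr)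
    have "poly (Nm PB11 - Nm PB12) s = (al s + be s*(s*hh)) * (cnj (al s) + cnj (be s)*(s*hh))
        - (al s*(s*hh) + be s*(1 + s*s*hh^2)) * (cnj (al s)*(s*hh) + cnj (be s)*(1 + s*s*hh^2))"
      unfolding s_def poly_diff poly_Nm_real B11 B12 using hhr sr by (simp add: hh_def s_def)
    also have "\<dots> = al s * de s - be s * ga s" unfolding gaE deE by (rule keyF)
    also have "\<dots> = d" by (rule detd)
    finally show "poly (Nm PB11 - Nm PB12) (complex_of_real r) = poly [:d:] (complex_of_real r)"
      by (simp add: s_def)
  qed

  have evenB11: "poly PB11 (-s) = poly PB11 s" for s using parA[of s] by (simp add: B11)
  have oddB12: "poly PB12 (-s) = - poly PB12 s" for s using parA[of s] by (simp add: B12 algebra_simps)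
  have PB12z: "PB12 = 0"
  proof (rule ccontr)
    assume nz: "PB12 \<noteq> 0"
    have o: "odd (degree PB12)" by (rule odd_deg[OF oddB12 nz])
    have dB12: "degree (Nm PB12) = 2 * degree PB12" by (rule degree_Nm[OF nz])
    have "degree (Nm PB11) \<noteq> degree (Nm PB12)"
    proof (cases "PB11 = 0")
      case True thus ?thesis using dB12 o by (auto simp: Nm_0 odd_pos)
    next
      case False
      have "even (degree PB11)" by (rule even_deg[OF evenB11 False])
      thus ?thesis using degree_Nm[OF False] dB12 o by auto
    qed
    hence "degree (Nm PB11 - Nm PB12) = max (degree (Nm PB11)) (degree (Nm PB12))" by (rule degree_diff_neq)
    moreover have "degree PB12 \<ge> 1" using o by (simp add: odd_pos Suc_le_eq)
    ultimately have "degree (Nm PB11 - Nm PB12) \<ge> 2" using dB12 by simp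
    thus False using NmEq by simp
  qed

  have B12z: "al s * (s * poly (hc h) (s*s)) + be s * (1 + s*s*(poly (hc h) (s*s))^2) = 0" for s
    using B12[of s] PB12z by simp
  define Qp where "Qp = Pa * Hc + [:0,0,1:] * pcompose Pr [:0,0,1:] * (1 + [:0,0,1:] * Hc^2)"
  have Qpv: "poly Qp s = al s * poly (hc h) (s*s) + s*s * poly Pr (s*s) * (1 + s*s*(poly (hc h) (s*s))^2)" for s
    by (simp add: Qp_def Hc al_def Pa poly_pcompose algebra_simps)
  have "Qp = 0"
  proof (rule peq_nz)
    fix s :: complex assume s: "s \<noteq> 0"
    have "s * poly Qp s = 0"
      using B12z[of s] stepB[OF s] unfolding Qpv by (simp add: algebra_simps power2_eq_square power3_eq_cube)
    thus "poly Qp s = poly 0 s" using s by simp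
  qed
  hence "poly Qp 0 = 0" by simp
  hence "al 0 * poly (hc h) 0 = 0" by (simp add: Qpv)
  moreover have "poly (hc h) 0 \<noteq> 0" using h0 by (simp add: poly_hc0)
  ultimately have "al 0 = 0" by simp
  moreover have "be 0 = 0" using parA[of 0] by simp
  ultimately show False using stepD[of 0] by simp
qed



lemma mu_zero: "mu 0 = mu0"
proof
  fix p :: Y
  obtain a b x y where p: "p = (a,b,x,y)" by (cases p)
  show "mu 0 p = mu0 p" unfolding p by (simp add: mu_def phi_def mu0_def sum3)
qed

lemma fe_refl_mu: "forms_equivalent (mu h) (mu h)"
  by (rule equiv_same0) simp

lemma to_mu1:
  fixes h :: "real poly"
  assumes "poly h 0 \<noteq> 0"
  shows "forms_equivalent (mu h) (mu 1)"
proof -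
  define c where "c = poly h 0"
  have c: "c \<noteq> 0" using assms by (simp add: c_def)
  have A: "forms_equivalent (mu h) (mu (scl h c))" by (rule equiv_scale[OF c])
  have p1: "poly (scl h c) 0 = 1"
  proof -
    have "poly (scl h c) 0 = poly h 0 / c" by (rule poly_scl0[OF c])
    also have "\<dots> = 1" using c by (simp add: c_def)
    finally show ?thesis .
  qed
  have B: "forms_equivalent (mu (scl h c)) (mu 1)"
    by (rule equiv_same0) (simp add: p1)
  show ?thesis by (rule fe_trans[OF A B])
qed

theorem mainTheorem2:
  shows "(\<forall>h :: real poly. forms_equivalent (mu h) mu0 \<longleftrightarrow> poly h 0 = 0)
     \<and> \<not> forms_equivalent mu0 (mu 1)
     \<and> card (range mu // {(\<mu>1, \<mu>2). forms_equivalent \<mu>1 \<mu>2}) = 2"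
proof (intro conjI allI)
  fix h :: "real poly"
  show "forms_equivalent (mu h) mu0 \<longleftrightarrow> poly h 0 = 0"
  proof
    assume "forms_equivalent (mu h) mu0"
    thus "poly h 0 = 0" using not_equiv0 by blast
  next
    assume "poly h 0 = 0"
    hence "forms_equivalent (mu h) (mu 0)" by (intro equiv_same0) simp
    thus "forms_equivalent (mu h) mu0" by (simp add: mu_zero)
  qed
next
  show ne: "\<not> forms_equivalent mu0 (mu 1)"
  proof
    assume "forms_equivalent mu0 (mu 1)"
    hence "forms_equivalent (mu 1) mu0" by (rule fe_sym)
    thus False using not_equiv0[of 1] by simp
  qed
  define R where "R = {(\<mu>1 :: Y \<Rightarrow> Y, \<mu>2). forms_equivalent \<mu>1 \<mu>2}"
  have cls: "R `` {x} = R `` {y}" if "forms_equivalent x y" for x y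
    using that fe_sym fe_trans unfolding R_def by blast
  have "range mu // R = {R `` {mu0}, R `` {mu 1}}"
  proof
    show "range mu // R \<subseteq> {R `` {mu0}, R `` {mu 1}}"
    proof
      fix C assume "C \<in> range mu // R"
      then obtain h where C: "C = R `` {mu h}" unfolding quotient_def by blast
      show "C \<in> {R `` {mu0}, R `` {mu 1}}"
      proof (cases "poly h 0 = 0")
        case True
        hence "forms_equivalent (mu h) (mu 0)" by (intro equiv_same0) simp
        thus ?thesis using C cls mu_zero by auto
      next
        case False
        thus ?thesis using C cls to_mu1 by auto
      qed
    qed
    show "{R `` {mu0}, R `` {mu 1}} \<subseteq> range mu // R"
      using mu_zero by (metis (no_types, lifting) empty_subsetI insert_subset quotientI rangeI)
  qed
  moreover have "R `` {mu0} \<noteq> R `` {mu 1}"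
  proof
    assume "R `` {mu0} = R `` {mu 1}"
    moreover have "mu 1 \<in> R `` {mu 1}" using fe_refl_mu unfolding R_def by simp
    ultimately have "mu 1 \<in> R `` {mu0}" by simp
    hence "forms_equivalent mu0 (mu 1)" unfolding R_def by simp
    thus False using ne by simp
  qed
  ultimately show "card (range mu // {(\<mu>1, \<mu>2). forms_equivalent \<mu>1 \<mu>2}) = 2"
    unfolding R_def by simp
qed


end
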